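(* Let $B\in\mathbb{C}^{n\times n}$ be nonzero of rank $r$ with Hartwig–Spindelböck decomposition $B=U\begin{bmatrix}\Sigma K&\Sigma L\\0&0\end{bmatrix}U^*$. Then $B$ is bi-dagger, i.e. $(B^2)^\dagger=(B^\dagger)^2$, if and only if $(\Sigma K\Sigma)^\dagger=\Sigma^{-1}K^*\Sigma^{-1}$.
   Context: $M^*$ is the conjugate transpose, $M^\dagger$ the Moore–Penrose inverse. Hartwig–Spindelböck decomposition: every $B\in\mathbb{C}^{n\times n}$ of rank $r>0$ can be written $B=U\begin{bmatrix}\Sigma K&\Sigma L\\0&0\end{bmatrix}U^*$ with $U$ unitary, $\Sigma\in\mathbb{C}^{r\times r}$ the positive diagonal matrix of nonzero singular values of $B$, $K\in\mathbb{C}^{r\times r}$, $L\in\mathbb{C}^{r\times(n-r)}$ with $KK^*+LL^*=I_r$. *)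

theory Defs
  imports "Jordan_Normal_Form.Schur_Decomposition" "Jordan_Normal_Form.DL_Rank"
begin

definition unitary_mat :: "nat \<Rightarrow> complex mat \<Rightarrow> bool" where
  "unitary_mat n U \<longleftrightarrow> U \<in> carrier_mat n n \<and> U * mat_adjoint U = 1\<^sub>m n \<and> mat_adjoint U * U = 1\<^sub>m n"

definition is_MP_inverse :: "complex mat \<Rightarrow> complex mat \<Rightarrow> bool" where
  "is_MP_inverse A X \<longleftrightarrow> X \<in> carrier_mat (dim_col A) (dim_row A) \<and>
     A * X * A = A \<and> X * A * X = X \<and>
     mat_adjoint (A * X) = A * X \<and> mat_adjoint (X * A) = X * A"

text \<open>Moore--Penrose inverse (exists and is unique).\<close>
definition MP_inverse :: "complex mat \<Rightarrow> complex mat" where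
  "MP_inverse A = (THE X. is_MP_inverse A X)"

end

theory Submission imports Defs begin

lemma adj_eq: "mat_adjoint (A :: complex mat) = mat (dim_col A) (dim_row A) (\<lambda>(i,j). cnj (A $$ (j,i)))"
  unfolding mat_adjoint_def mat_of_rows_def
  by (rule eq_matI) (auto simp: mat_of_rows_def)

lemma adj_dim[simp]: "dim_row (mat_adjoint (A::complex mat)) = dim_col A" "dim_col (mat_adjoint A) = dim_row A"
  by (auto simp: adj_eq)

lemma adj_index[simp]: "i < dim_col A \<Longrightarrow> j < dim_row A \<Longrightarrow> mat_adjoint (A::complex mat) $$ (i,j) = cnj (A $$ (j,i))"
  by (simp add: adj_eq)

lemma adj_carrier[simp]: assumes "(A::complex mat) \<in> carrier_mat a b" shows "mat_adjoint A \<in> carrier_mat b a"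
proof -
  have "dim_row A = a" "dim_col A = b" using assms by auto
  thus ?thesis by (intro carrier_matI) simp_all
qed

lemma adj_adj[simp]: "mat_adjoint (mat_adjoint (A::complex mat)) = A"
  by (rule eq_matI, simp_all)

lemma adj_add: assumes A: "(A::complex mat) \<in> carrier_mat a b" and B: "B \<in> carrier_mat a b" shows 
   "mat_adjoint (A + B) = mat_adjoint A + mat_adjoint B"
  using A B unfolding adj_eq by (intro eq_matI) simp_all


lemma adj_minus: assumes A: "(A::complex mat) \<in> carrier_mat a b" and B: "B \<in> carrier_mat a b" shows 
   "mat_adjoint (A - B) = mat_adjoint A - mat_adjoint B"
  using A B unfolding adj_eq by (intro eq_matI) simp_all

lemma adj_smult: "mat_adjoint (c \<cdot>\<^sub>m (A::complex mat)) = cnj c \<cdot>\<^sub>m mat_adjoint A"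
  unfolding adj_eq by (intro eq_matI) simp_all

lemma adj_one[simp]: "mat_adjoint (1\<^sub>m n :: complex mat) = 1\<^sub>m n"
  unfolding adj_eq by (intro eq_matI) simp_all

lemma adj_zero[simp]: "mat_adjoint (0\<^sub>m a b :: complex mat) = 0\<^sub>m b a"
  unfolding adj_eq by (intro eq_matI) simp_all

lemma adj_mult: assumes A: "(A::complex mat) \<in> carrier_mat a b" and B: "B \<in> carrier_mat b c"
  shows "mat_adjoint (A * B) = mat_adjoint B * mat_adjoint A"
proof (rule eq_matI)
  fix i j assume i: "i < dim_row (mat_adjoint B * mat_adjoint A)" and j: "j < dim_col (mat_adjoint B * mat_adjoint A)"
  have dA: "dim_row A = a" "dim_col A = b" and dB: "dim_row B = b" "dim_col B = c" using A B by auto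
  have i: "i < c" and j: "j < a" using i j dA dB by auto
  have "mat_adjoint (A * B) $$ (i, j) = cnj (\<Sum>k<b. A $$ (j,k) * B $$ (k,i))"
    using dA dB i j by (simp add: scalar_prod_def lessThan_atLeast0)
  also have "\<dots> = (\<Sum>k<b. cnj (B $$ (k,i)) * cnj (A $$ (j,k)))"
    by (simp add: mult.commute)
  also have "\<dots> = (mat_adjoint B * mat_adjoint A) $$ (i, j)"
    using dA dB i j by (simp add: scalar_prod_def lessThan_atLeast0)
  finally show "mat_adjoint (A * B) $$ (i, j) = (mat_adjoint B * mat_adjoint A) $$ (i, j)" .
next
  show "dim_row (mat_adjoint (A * B)) = dim_row (mat_adjoint B * mat_adjoint A)" by simp
  show "dim_col (mat_adjoint (A * B)) = dim_col (mat_adjoint B * mat_adjoint A)" by simp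
qed

lemma adj_mult': "dim_col A = dim_row B \<Longrightarrow> mat_adjoint ((A::complex mat) * B) = mat_adjoint B * mat_adjoint A"
  by (rule adj_mult[of A "dim_row A" "dim_col A" B "dim_col B"]) auto

lemma assoc_dim[simp]: "dim_col A = dim_row B \<Longrightarrow> dim_col B = dim_row C \<Longrightarrow> (A * B) * C = A * (B * (C :: 'a :: semiring_0 mat))"
  by (rule assoc_mult_mat[of A "dim_row A" "dim_col A" B "dim_col B" C "dim_col C"]) auto

lemma MP_unique: assumes X: "is_MP_inverse A X" and Y: "is_MP_inverse A Y" shows "X = Y"
proof -
  define m where "m = dim_row A"
  define n where "n = dim_col A"
  have A: "A \<in> carrier_mat m n" unfolding m_def n_def by auto
  have Xc: "X \<in> carrier_mat n m" and Yc: "Y \<in> carrier_mat n m"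
    using X Y unfolding is_MP_inverse_def m_def n_def by auto
  have [simp]: "dim_row A = m" "dim_col A = n" "dim_row X = n" "dim_col X = m" "dim_row Y = n" "dim_col Y = m"
    using A Xc Yc by auto
  from X have X1: "A * X * A = A" and X2: "X * A * X = X" and X3: "mat_adjoint (A * X) = A * X"
    and X4: "mat_adjoint (X * A) = X * A" unfolding is_MP_inverse_def by auto
  from Y have Y1: "A * Y * A = A" and Y2: "Y * A * Y = Y" and Y3: "mat_adjoint (A * Y) = A * Y"
    and Y4: "mat_adjoint (Y * A) = Y * A" unfolding is_MP_inverse_def by auto
  have X1': "A * (X * A) = A" using X1 A Xc by simp
  have Y1': "A * (Y * A) = A" using Y1 A Yc by simp
  have "A * X = (A * Y * A) * X" by (simp only: Y1)
  also have "\<dots> = (A * Y) * (A * X)" by simp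
  also have "\<dots> = mat_adjoint (A * Y) * mat_adjoint (A * X)" by (simp only: X3 Y3)
  also have "\<dots> = mat_adjoint ((A * X) * (A * Y))" by (rule adj_mult'[symmetric]) simp
  also have "(A * X) * (A * Y) = (A * X * A) * Y" by simp
  also have "\<dots> = A * Y" by (simp only: X1)
  finally have AXY: "A * X = A * Y" using Y3 by simp
  have "X * A = X * (A * Y * A)" by (simp only: Y1)
  also have "\<dots> = (X * A) * (Y * A)" by simp
  also have "\<dots> = mat_adjoint (X * A) * mat_adjoint (Y * A)" by (simp only: X4 Y4)
  also have "\<dots> = mat_adjoint ((Y * A) * (X * A))" by (rule adj_mult'[symmetric]) simp
  also have "(Y * A) * (X * A) = Y * (A * X * A)" by simp
  also have "\<dots> = Y * A" by (simp only: X1)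
  finally have XAY: "X * A = Y * A" using Y4 by simp
  have "X = X * A * X" by (simp only: X2)
  also have "\<dots> = X * (A * X)" using A Xc by simp
  also have "\<dots> = X * (A * Y)" by (simp only: AXY)
  also have "\<dots> = (X * A) * Y" using A Xc Yc by simp
  also have "\<dots> = Y * A * Y" by (simp only: XAY)
  also have "\<dots> = Y" by (simp only: Y2)
  finally show ?thesis .
qed

lemma MP_inverse_eq: "is_MP_inverse A X \<Longrightarrow> MP_inverse A = X"
  unfolding MP_inverse_def using MP_unique by blast


lemma mult_add_dim: "dim_col A = dim_row B \<Longrightarrow> dim_row B = dim_row C \<Longrightarrow> dim_col B = dim_col C \<Longrightarrow>
  A * (B + C) = A * B + A * (C :: 'a :: semiring_0 mat)"
  by (rule mult_add_distrib_mat[of A "dim_row A" "dim_col A" B "dim_col B"]) auto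
lemma add_mult_dim: "dim_row A = dim_row B \<Longrightarrow> dim_col A = dim_col B \<Longrightarrow> dim_col B = dim_row C \<Longrightarrow>
  (A + B) * C = A * C + B * (C :: 'a :: semiring_0 mat)"
  by (rule add_mult_distrib_mat[of A "dim_row A" "dim_col A" B C "dim_col C"]) auto
lemma mult_minus_dim: "dim_col A = dim_row B \<Longrightarrow> dim_row B = dim_row C \<Longrightarrow> dim_col B = dim_col C \<Longrightarrow>
  A * (B - C) = A * B - A * (C :: 'a :: ring mat)"
  by (rule mult_minus_distrib_mat[of A "dim_row A" "dim_col A" B "dim_col B"]) auto
lemma minus_mult_dim: "dim_row A = dim_row B \<Longrightarrow> dim_col A = dim_col B \<Longrightarrow> dim_col B = dim_row C \<Longrightarrow>
  (A - B) * C = A * C - B * (C :: 'a :: ring mat)"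
  by (rule minus_mult_distrib_mat[of A "dim_row A" "dim_col A" B C "dim_col C"]) auto
lemma mult_smult_dim: "dim_col A = dim_row B \<Longrightarrow> A * (c \<cdot>\<^sub>m B) = c \<cdot>\<^sub>m (A * (B :: 'a :: comm_semiring_0 mat))"
  by (rule mult_smult_distrib[of A "dim_row A" "dim_col A" B "dim_col B"]) auto
lemma smult_mult_dim: "dim_col A = dim_row B \<Longrightarrow> (c \<cdot>\<^sub>m A) * B = c \<cdot>\<^sub>m (A * (B :: 'a :: comm_semiring_0 mat))"
  by (rule mult_smult_assoc_mat[of A "dim_row A" "dim_col A" B "dim_col B"]) auto

lemmas dist_dim = mult_add_dim add_mult_dim mult_minus_dim minus_mult_dim mult_smult_dim smult_mult_dim

lemma adj_self_zero: assumes w: "(w :: complex mat) \<in> carrier_mat m 1" and z: "(mat_adjoint w * w) $$ (0,0) = 0"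
  shows "w = 0\<^sub>m m 1"
proof -
  have dw: "dim_row w = m" "dim_col w = 1" using w by auto
  have "(mat_adjoint w * w) $$ (0,0) = (\<Sum>i<m. cnj (w $$ (i,0)) * w $$ (i,0))"
    using dw by (simp add: scalar_prod_def lessThan_atLeast0)
  also have "\<dots> = of_real (\<Sum>i<m. (cmod (w $$ (i,0)))^2)"
    by (simp add: of_real_sum complex_norm_square mult.commute del: of_real_power)
  finally have "complex_of_real (\<Sum>i<m. (cmod (w $$ (i,0)))^2) = 0" using z by metis
  hence "(\<Sum>i<m. (cmod (w $$ (i,0)))^2) = 0" by (simp only: of_real_eq_0_iff)
  hence "\<forall>i\<in>{..<m}. (cmod (w $$ (i,0)))^2 = 0"
    by (subst sum_nonneg_eq_0_iff[symmetric]) auto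
  thus ?thesis using dw by (intro eq_matI) auto
qed


lemma step13:
  fixes A C E E' u :: "complex mat"
  assumes A: "A \<in> carrier_mat m n" and C: "C \<in> carrier_mat n m" and E: "E \<in> carrier_mat n n"
    and u: "u \<in> carrier_mat n 1"
    and EC: "E * C = C" and H: "mat_adjoint (A * C) = A * C" and I: "A * C * A * E = A * E"
    and E': "E' = E + u * mat_adjoint u" and E'E: "E' * E = E" and E'u: "E' * u = u"
  shows "\<exists>C' \<in> carrier_mat n m. E' * C' = C' \<and> mat_adjoint (A * C') = A * C' \<and> A * C' * A * E' = A * E'"
proof -
  have [simp]: "dim_row A = m" "dim_col A = n" "dim_row C = n" "dim_col C = m" "dim_row E = n" "dim_col E = n"
    "dim_row u = n" "dim_col u = 1" using A C E u by auto
  have [simp]: "dim_row E' = n" "dim_col E' = n" using E' by auto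
  define P where "P = A * C"
  define a where "a = A * u"
  define w where "w = a - P * a"
  define wt where "wt = mat_adjoint w"
  define \<alpha> where "\<alpha> = (wt * w) $$ (0,0)"
  have [simp]: "dim_row P = m" "dim_col P = m" "dim_row a = m" "dim_col a = 1"
    "dim_row w = m" "dim_col w = 1" "dim_row wt = 1" "dim_col wt = m"
    unfolding P_def a_def w_def wt_def by auto
  have HP: "mat_adjoint P = P" using H unfolding P_def .
  have IP: "P * (A * E) = A * E" using I unfolding P_def by simp
  have PP: "P * P = P"
  proof -
    have "P * P = (A * C * A) * C" unfolding P_def by simp
    also have "\<dots> = (A * C * A) * (E * C)" using EC by simp
    also have "\<dots> = (A * C * A * E) * C" by simp
    also have "\<dots> = (A * E) * C" by (simp only: I)
    also have "\<dots> = P" unfolding P_def using EC by simp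
    finally show ?thesis .
  qed
  have wt_eq: "wt = mat_adjoint a - mat_adjoint a * P"
    unfolding wt_def w_def
    by (subst adj_minus[of _ m 1], force, force, subst adj_mult', simp, simp add: HP)
  have wtAE: "wt * (A * E) = 0\<^sub>m 1 n"
  proof -
    have "wt * (A * E) = mat_adjoint a * (A * E) - mat_adjoint a * (P * (A * E))"
      unfolding wt_eq by (simp add: dist_dim)
    also have "\<dots> = 0\<^sub>m 1 n" unfolding IP by (intro eq_matI) simp_all
    finally show ?thesis .
  qed
  have wtP: "wt * P = 0\<^sub>m 1 m"
  proof -
    have "wt * P = mat_adjoint a * P - mat_adjoint a * (P * P)"
      unfolding wt_eq by (simp add: dist_dim)
    also have "\<dots> = 0\<^sub>m 1 m" unfolding PP by (intro eq_matI) simp_all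
    finally show ?thesis .
  qed
  have wta: "wt * a = wt * w"
  proof -
    have "wt * w = wt * a - (wt * P) * a" unfolding w_def by (simp add: dist_dim)
    also have "\<dots> = wt * a" unfolding wtP by (intro eq_matI) simp_all
    finally show ?thesis by simp
  qed
  have AE': "A * E' = A * E + a * mat_adjoint u" unfolding E' a_def by (simp add: dist_dim)
  have E'C: "E' * C = C"
  proof -
    have "E' * C = E' * (E * C)" using EC by simp
    also have "\<dots> = (E' * E) * C" by simp
    finally show ?thesis using E'E EC by simp
  qed
  show ?thesis
  proof (cases "\<alpha> = 0")
    case True
    have "w = 0\<^sub>m m 1" by (rule adj_self_zero[of _ m]) (use True in \<open>auto simp: \<alpha>_def wt_def\<close>)
    have Pa: "P * a = a"
    proof (rule eq_matI)
      fix i j assume ij: "i < dim_row a" "j < dim_col a"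
      with \<open>w = 0\<^sub>m m 1\<close> have "w $$ (i,j) = 0" by simp
      thus "(P * a) $$ (i,j) = a $$ (i,j)" unfolding w_def using ij by simp
    qed simp_all
    show ?thesis
    proof (intro bexI[of _ C] conjI)
      show "E' * C = C" by (rule E'C)
      show "mat_adjoint (A * C) = A * C" by (rule H)
      have "A * C * A * E' = P * (A * E')" unfolding P_def by simp
      also have "\<dots> = P * (A * E) + (P * a) * mat_adjoint u" unfolding AE' by (simp add: dist_dim)
      also have "\<dots> = A * E'" unfolding IP Pa AE' ..
      finally show "A * C * A * E' = A * E'" .
    qed (rule C)
  next
    case False
    define c where "c = 1 / \<alpha>"
    have cnj_alpha: "cnj \<alpha> = \<alpha>"
    proof -
      have "mat_adjoint (wt * w) = wt * w" unfolding wt_def by (subst adj_mult') simp_all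
      hence "mat_adjoint (wt * w) $$ (0,0) = (wt * w) $$ (0,0)" by simp
      thus ?thesis unfolding \<alpha>_def by simp
    qed
    have cnj_c: "cnj c = c" unfolding c_def using cnj_alpha by simp
    have c\<alpha>: "c * \<alpha> = 1" unfolding c_def using False by simp
    have ac1: "\<And>x. \<alpha> * (c * x) = x" using c\<alpha> by (metis mult.assoc mult.commute mult_1)
    have ac2: "\<And>x. c * (\<alpha> * x) = x" using c\<alpha> by (metis mult.assoc mult_1)
    define C' where "C' = C - c \<cdot>\<^sub>m (C * a * wt) + c \<cdot>\<^sub>m (u * wt)"
    have C'c: "C' \<in> carrier_mat n m" unfolding C'_def by (intro carrier_matI) simp_all
    have AC': "A * C' = P + c \<cdot>\<^sub>m (w * wt)"
    proof -
      have "A * C' = P - c \<cdot>\<^sub>m (P * a * wt) + c \<cdot>\<^sub>m (a * wt)"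
        unfolding C'_def P_def a_def by (simp add: dist_dim)
      also have "\<dots> = P + c \<cdot>\<^sub>m (a * wt - P * a * wt)"
        by (intro eq_matI) (simp_all add: algebra_simps)
      also have "a * wt - P * a * wt = w * wt" unfolding w_def by (simp add: dist_dim)
      finally show ?thesis .
    qed
    show ?thesis
    proof (intro bexI[of _ C'] conjI)
      have e1: "E' * (C * (a * wt)) = C * (a * wt)" 
        by (subst assoc_dim[symmetric], simp, simp, simp only: E'C)
      have e2: "E' * (u * wt) = u * wt" 
        by (subst assoc_dim[symmetric], simp, simp, simp only: E'u)
      show "E' * C' = C'"
        unfolding C'_def using E'C by (simp add: dist_dim e1 e2)
      show "mat_adjoint (A * C') = A * C'"
        unfolding AC' by (subst adj_add[of _ m m], force, force, simp add: adj_smult cnj_c HP adj_mult' wt_def)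
      have wtw: "wt * w = \<alpha> \<cdot>\<^sub>m 1\<^sub>m 1" unfolding \<alpha>_def by (intro eq_matI) auto
      have Qa: "(P + c \<cdot>\<^sub>m (w * wt)) * a = a"
      proof -
        have "(P + c \<cdot>\<^sub>m (w * wt)) * a = P * a + c \<cdot>\<^sub>m (w * (wt * a))" by (simp add: dist_dim)
        also have "\<dots> = P * a + c \<cdot>\<^sub>m (\<alpha> \<cdot>\<^sub>m w)" unfolding wta wtw by (simp add: dist_dim)
        also have "\<dots> = a" unfolding w_def by (intro eq_matI) (simp_all add: ac1 ac2 algebra_simps)
        finally show ?thesis .
      qed
      have QAE: "(P + c \<cdot>\<^sub>m (w * wt)) * (A * E) = A * E"
      proof -
        have "(P + c \<cdot>\<^sub>m (w * wt)) * (A * E) = P * (A * E) + c \<cdot>\<^sub>m (w * (wt * (A * E)))" by (simp add: dist_dim)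
        also have "\<dots> = A * E" unfolding IP wtAE by (intro eq_matI) simp_all
        finally show ?thesis .
      qed
      have "A * C' * A * E' = (P + c \<cdot>\<^sub>m (w * wt)) * (A * E')" unfolding AC' by simp
      also have "\<dots> = (P + c \<cdot>\<^sub>m (w * wt)) * (A * E) + ((P + c \<cdot>\<^sub>m (w * wt)) * a) * mat_adjoint u"
        unfolding AE' by (simp add: dist_dim del: assoc_dim) (simp)
      also have "\<dots> = A * E'" unfolding QAE Qa AE' ..
      finally show "A * C' * A * E' = A * E'" .
    qed (rule C'c)
  qed
qed

lemma exists13: assumes A: "(A::complex mat) \<in> carrier_mat m n"
  shows "\<exists>C \<in> carrier_mat n m. A * C * A = A \<and> mat_adjoint (A * C) = A * C"
proof -
  have [simp]: "dim_row A = m" "dim_col A = n" using A by auto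
  define E where "E k = mat_diag n (\<lambda>i. if i < k then (1::complex) else 0)" for k
  have Ec: "E k \<in> carrier_mat n n" for k unfolding E_def by simp
  have [simp]: "dim_row (E k) = n" "dim_col (E k) = n" for k using Ec[of k] by auto
  have "k \<le> n \<Longrightarrow> \<exists>C \<in> carrier_mat n m. E k * C = C \<and> mat_adjoint (A * C) = A * C \<and> A * C * A * E k = A * E k" for k
  proof (induction k)
    case 0
    have E0: "E 0 = 0\<^sub>m n n" unfolding E_def mat_diag_def by (intro eq_matI) auto
    show ?case by (intro bexI[of _ "0\<^sub>m n m"]) (auto simp: E0)
  next
    case (Suc k)
    then obtain C where C: "C \<in> carrier_mat n m" and EC: "E k * C = C" and H: "mat_adjoint (A * C) = A * C"
      and I: "A * C * A * E k = A * E k" by auto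
    define u where "u = mat n 1 (\<lambda>(i,j). if i = k then (1::complex) else 0)"
    have uc: "u \<in> carrier_mat n 1" unfolding u_def by simp
    have E': "E (Suc k) = E k + u * mat_adjoint u"
      unfolding E_def u_def mat_diag_def by (intro eq_matI) (auto simp: scalar_prod_def)
    have E'E: "E (Suc k) * E k = E k"
      unfolding E_def mat_diag_diag by (rule arg_cong[where f="mat_diag n"]) auto
    have E'u: "E (Suc k) * u = u"
      unfolding E_def by (subst mat_diag_mult_left[OF uc]) (auto simp: u_def)
    show ?case by (rule step13[OF A C Ec uc EC H I E' E'E E'u])
  qed
  from this[of n] obtain C where C: "C \<in> carrier_mat n m" and H: "mat_adjoint (A * C) = A * C"
    and I: "A * C * A * E n = A * E n" by auto
  have En: "E n = 1\<^sub>m n" unfolding E_def mat_diag_def by (intro eq_matI) auto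
  have "A * C * A = A" using I C unfolding En by simp
  thus ?thesis using C H by auto
qed

lemma MP_exists: "\<exists>X. is_MP_inverse (A :: complex mat) X"
proof -
  define m where "m = dim_row A"
  define n where "n = dim_col A"
  have A: "A \<in> carrier_mat m n" unfolding m_def n_def by auto
  obtain C where C: "C \<in> carrier_mat n m" and C1: "A * C * A = A" and C3: "mat_adjoint (A * C) = A * C"
    using exists13[OF A] by auto
  obtain D where D: "D \<in> carrier_mat m n" and D1: "mat_adjoint A * D * mat_adjoint A = mat_adjoint A"
    and D3: "mat_adjoint (mat_adjoint A * D) = mat_adjoint A * D"
    using exists13[OF adj_carrier[OF A]] by auto
  define Y where "Y = mat_adjoint D"
  have [simp]: "dim_row A = m" "dim_col A = n" "dim_row C = n" "dim_col C = m" "dim_row D = m" "dim_col D = n"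
    "dim_row Y = n" "dim_col Y = m"
    using A C D unfolding Y_def by auto
  have YA: "Y * A = mat_adjoint A * D"
  proof -
    have "mat_adjoint (mat_adjoint A * D) = Y * A" unfolding Y_def by (subst adj_mult') simp_all
    thus ?thesis using D3 by simp
  qed
  have YA3: "mat_adjoint (Y * A) = Y * A" unfolding YA using D3 .
  have AYA: "A * (Y * A) = A"
  proof -
    have "mat_adjoint (mat_adjoint A * D * mat_adjoint A) = A * mat_adjoint (mat_adjoint A * D)"
      by (subst adj_mult') (simp_all)
    also have "mat_adjoint (mat_adjoint A * D) = Y * A" unfolding YA using D3 by simp
    finally show ?thesis using D1 by simp
  qed
  define X where "X = Y * A * C"
  have "is_MP_inverse A X" unfolding is_MP_inverse_def
  proof (intro conjI)
    show "X \<in> carrier_mat (dim_col A) (dim_row A)" unfolding X_def by (intro carrier_matI) simp_all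
    have AX: "A * X = A * C"
    proof -
      have "A * X = (A * (Y * A)) * C" unfolding X_def by simp
      also have "\<dots> = A * C" by (simp only: AYA)
      finally show ?thesis .
    qed
    have XA: "X * A = Y * A"
    proof -
      have "X * A = Y * (A * C * A)" unfolding X_def by simp
      also have "\<dots> = Y * A" by (simp only: C1)
      finally show ?thesis .
    qed
    show "A * X * A = A" unfolding AX by (rule C1)
    show "X * A * X = X"
    proof -
      have "X * A * X = (Y * A) * X" unfolding XA ..
      also have "\<dots> = Y * (A * (Y * A)) * C" unfolding X_def by simp
      also have "\<dots> = X" unfolding AYA X_def ..
      finally show ?thesis .
    qed
    show "mat_adjoint (A * X) = A * X" unfolding AX by (rule C3)
    show "mat_adjoint (X * A) = X * A" unfolding XA by (rule YA3)
  qed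
  thus ?thesis by blast
qed

lemma MP_inverse_is: "is_MP_inverse A (MP_inverse (A::complex mat))"
  using MP_exists[of A] MP_inverse_eq by metis

lemma adj3: "dim_col A = dim_row Z \<Longrightarrow> dim_col Z = dim_row B \<Longrightarrow>
  mat_adjoint ((A::complex mat) * Z * B) = mat_adjoint B * mat_adjoint Z * mat_adjoint A"
  by (simp add: adj_mult')

lemma MP_transfer:
  fixes P Q M X :: "complex mat"
  assumes P: "P \<in> carrier_mat n r" and Q: "Q \<in> carrier_mat r n" and M: "M \<in> carrier_mat r r"
    and PP: "mat_adjoint P * P = 1\<^sub>m r" and QQ: "Q * mat_adjoint Q = 1\<^sub>m r"
    and X: "is_MP_inverse M X"
  shows "is_MP_inverse (P * M * Q) (mat_adjoint Q * X * mat_adjoint P)"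
proof -
  from X have Xc: "X \<in> carrier_mat r r" and X1: "M * X * M = M" and X2: "X * M * X = X"
    and X3: "mat_adjoint (M * X) = M * X" and X4: "mat_adjoint (X * M) = X * M"
    using M unfolding is_MP_inverse_def by auto
  have [simp]: "dim_row P = n" "dim_col P = r" "dim_row Q = r" "dim_col Q = n" "dim_row M = r" "dim_col M = r"
    "dim_row X = r" "dim_col X = r" using P Q M Xc by auto
  have AY: "(P * M * Q) * (mat_adjoint Q * X * mat_adjoint P) = P * (M * X) * mat_adjoint P"
  proof -
    have "(P * M * Q) * (mat_adjoint Q * X * mat_adjoint P) = P * M * (Q * mat_adjoint Q) * X * mat_adjoint P" by simp
    also have "\<dots> = P * M * 1\<^sub>m r * X * mat_adjoint P" by (simp only: QQ)
    also have "\<dots> = P * (M * X) * mat_adjoint P" by simp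
    finally show ?thesis .
  qed
  have YA: "(mat_adjoint Q * X * mat_adjoint P) * (P * M * Q) = mat_adjoint Q * (X * M) * Q"
  proof -
    have "(mat_adjoint Q * X * mat_adjoint P) * (P * M * Q) = mat_adjoint Q * X * (mat_adjoint P * P) * M * Q" by simp
    also have "\<dots> = mat_adjoint Q * X * 1\<^sub>m r * M * Q" by (simp only: PP)
    also have "\<dots> = mat_adjoint Q * (X * M) * Q" by simp
    finally show ?thesis .
  qed
  show ?thesis unfolding is_MP_inverse_def
  proof (intro conjI)
    show "mat_adjoint Q * X * mat_adjoint P \<in> carrier_mat (dim_col (P * M * Q)) (dim_row (P * M * Q))"
      by (intro carrier_matI) simp_all
    have "P * (M * X) * mat_adjoint P * (P * M * Q) = P * M * X * (mat_adjoint P * P) * M * Q" by simp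
    also have "\<dots> = P * M * X * 1\<^sub>m r * M * Q" by (simp only: PP)
    also have "\<dots> = P * (M * X * M) * Q" by simp
    also have "\<dots> = P * M * Q" by (simp only: X1)
    finally show "P * M * Q * (mat_adjoint Q * X * mat_adjoint P) * (P * M * Q) = P * M * Q" unfolding AY .
    have "mat_adjoint Q * (X * M) * Q * (mat_adjoint Q * X * mat_adjoint P) = mat_adjoint Q * X * M * (Q * mat_adjoint Q) * X * mat_adjoint P" by simp
    also have "\<dots> = mat_adjoint Q * X * M * 1\<^sub>m r * X * mat_adjoint P" by (simp only: QQ)
    also have "\<dots> = mat_adjoint Q * (X * M * X) * mat_adjoint P" by simp
    also have "\<dots> = mat_adjoint Q * X * mat_adjoint P" by (simp only: X2)
    finally show "mat_adjoint Q * X * mat_adjoint P * (P * M * Q) * (mat_adjoint Q * X * mat_adjoint P) = mat_adjoint Q * X * mat_adjoint P" unfolding YA .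
    have "mat_adjoint (P * (M * X) * mat_adjoint P) = P * mat_adjoint (M * X) * mat_adjoint P"
      by (subst adj3) simp_all
    thus "mat_adjoint (P * M * Q * (mat_adjoint Q * X * mat_adjoint P)) = P * M * Q * (mat_adjoint Q * X * mat_adjoint P)"
      unfolding AY X3 .
    have "mat_adjoint (mat_adjoint Q * (X * M) * Q) = mat_adjoint Q * mat_adjoint (X * M) * Q"
      by (subst adj3) simp_all
    thus "mat_adjoint (mat_adjoint Q * X * mat_adjoint P * (P * M * Q)) = mat_adjoint Q * X * mat_adjoint P * (P * M * Q)"
      unfolding YA X4 .
  qed
qed

lemma four_block_zero_size: assumes "X \<in> carrier_mat a b" "D \<in> carrier_mat 0 0"
  shows "four_block_mat X B C D = X"
  using assms by (intro eq_matI) auto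

lemma adj_four_block: assumes "(A::complex mat) \<in> carrier_mat a1 b1" "B \<in> carrier_mat a1 b2" "C \<in> carrier_mat a2 b1" "D \<in> carrier_mat a2 b2"
  shows "mat_adjoint (four_block_mat A B C D) = four_block_mat (mat_adjoint A) (mat_adjoint C) (mat_adjoint B) (mat_adjoint D)"
proof -
  have [simp]: "dim_row A = a1" "dim_col A = b1" "dim_row B = a1" "dim_col B = b2" "dim_row C = a2" "dim_col C = b1"
    "dim_row D = a2" "dim_col D = b2" using assms by auto
  show ?thesis unfolding adj_eq by (intro eq_matI) auto
qed

lemma diag_four_block_left: assumes K: "K \<in> carrier_mat r r" and L: "L \<in> carrier_mat r k"
  shows "mat_diag r f * four_block_mat K L (0\<^sub>m 0 r) (0\<^sub>m 0 k) = four_block_mat (mat_diag r f * K) (mat_diag r f * L) (0\<^sub>m 0 r) (0\<^sub>m 0 k)"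
proof -
  have R: "four_block_mat K L (0\<^sub>m 0 r) (0\<^sub>m 0 k) \<in> carrier_mat r (r + k)"
    using four_block_carrier_mat[OF K, of "0\<^sub>m 0 k" 0 k L "0\<^sub>m 0 r"] by simp
  have [simp]: "dim_row K = r" "dim_col K = r" "dim_row L = r" "dim_col L = k" using K L by auto
  show ?thesis
    unfolding mat_diag_mult_left[OF R] mat_diag_mult_left[OF K] mat_diag_mult_left[OF L]
    by (intro eq_matI) auto
qed

lemma cancel_outer: fixes P Q Z1 Z2 :: "complex mat"
  assumes P: "P \<in> carrier_mat n r" and Q: "Q \<in> carrier_mat r n"
    and PP: "mat_adjoint P * P = 1\<^sub>m r" and QQ: "Q * mat_adjoint Q = 1\<^sub>m r"
    and Z1: "Z1 \<in> carrier_mat r r" and Z2: "Z2 \<in> carrier_mat r r"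
  shows "mat_adjoint Q * Z1 * mat_adjoint P = mat_adjoint Q * Z2 * mat_adjoint P \<longleftrightarrow> Z1 = Z2"
proof
  have [simp]: "dim_row P = n" "dim_col P = r" "dim_row Q = r" "dim_col Q = n" "dim_row Z1 = r" "dim_col Z1 = r"
    "dim_row Z2 = r" "dim_col Z2 = r" using P Q Z1 Z2 by auto
  have c: "Q * (mat_adjoint Q * Z * mat_adjoint P) * P = Z" if "dim_row Z = r" "dim_col Z = r" for Z
  proof -
    have "Q * (mat_adjoint Q * Z * mat_adjoint P) * P = (Q * mat_adjoint Q) * Z * (mat_adjoint P * P)"
      using that by simp
    also have "\<dots> = 1\<^sub>m r * Z * 1\<^sub>m r" by (simp only: PP QQ)
    also have "\<dots> = Z" using that by simp
    finally show ?thesis .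
  qed
  assume "mat_adjoint Q * Z1 * mat_adjoint P = mat_adjoint Q * Z2 * mat_adjoint P"
  hence "Q * (mat_adjoint Q * Z1 * mat_adjoint P) * P = Q * (mat_adjoint Q * Z2 * mat_adjoint P) * P" by simp
  thus "Z1 = Z2" using c[of Z1] c[of Z2] by simp
qed simp

theorem corollary5p4:
  fixes n r :: nat and B U K L :: "complex mat" and s :: "nat \<Rightarrow> real"
  assumes B: "B \<in> carrier_mat n n"
    and Bnz: "B \<noteq> 0\<^sub>m n n"
    and rk: "vec_space.rank n B = r"
    and r: "0 < r" "r \<le> n"
    and U: "unitary_mat n U"
    and s: "\<And>i. i < r \<Longrightarrow> s i > 0"
    and K: "K \<in> carrier_mat r r"
    and L: "L \<in> carrier_mat r (n - r)"
    and KL: "K * mat_adjoint K + L * mat_adjoint L = 1\<^sub>m r"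
    and HS: "B = U * four_block_mat
                  (mat_diag r (\<lambda>i. complex_of_real (s i)) * K)
                  (mat_diag r (\<lambda>i. complex_of_real (s i)) * L)
                  (0\<^sub>m (n - r) r) (0\<^sub>m (n - r) (n - r)) * mat_adjoint U"
  shows "MP_inverse (B * B) = MP_inverse B * MP_inverse B \<longleftrightarrow>
    MP_inverse (mat_diag r (\<lambda>i. complex_of_real (s i)) * K * mat_diag r (\<lambda>i. complex_of_real (s i)))
      = mat_diag r (\<lambda>i. complex_of_real (1 / s i)) * mat_adjoint K * mat_diag r (\<lambda>i. complex_of_real (1 / s i))"
proof -
  define S where "S = mat_diag r (\<lambda>i. complex_of_real (s i))"
  define S' where "S' = mat_diag r (\<lambda>i. complex_of_real (1 / s i))"
  define J :: "complex mat" where "J = four_block_mat (1\<^sub>m r) (0\<^sub>m r 0) (0\<^sub>m (n-r) r) (0\<^sub>m (n-r) 0)"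
  define R where "R = four_block_mat K L (0\<^sub>m 0 r) (0\<^sub>m 0 (n-r))"
  define P where "P = U * J"
  define Q where "Q = R * mat_adjoint U"
  have nr: "r + (n - r) = n" using r by simp
  have Uc: "U \<in> carrier_mat n n" and UU: "mat_adjoint U * U = 1\<^sub>m n"
    using U unfolding unitary_mat_def by auto
  have Sc: "S \<in> carrier_mat r r" and S'c: "S' \<in> carrier_mat r r" unfolding S_def S'_def by auto
  have Jc: "J \<in> carrier_mat n r" unfolding J_def using four_block_carrier_mat[of "1\<^sub>m r :: complex mat" r r "0\<^sub>m (n-r) 0" "n-r" 0] nr by simp
  have Rc: "R \<in> carrier_mat r n" unfolding R_def using four_block_carrier_mat[OF K, of "0\<^sub>m 0 (n-r)" 0 "n-r"] nr by simp
  have [simp]: "dim_row U = n" "dim_col U = n" "dim_row S = r" "dim_col S = r" "dim_row S' = r" "dim_col S' = r"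
    "dim_row J = n" "dim_col J = r" "dim_row R = r" "dim_col R = n" "dim_row K = r" "dim_col K = r"
    "dim_row L = r" "dim_col L = n - r"
    using Uc Sc S'c Jc Rc K L by auto
  have Pc: "P \<in> carrier_mat n r" and Qc: "Q \<in> carrier_mat r n" unfolding P_def Q_def by (auto intro!: carrier_matI)
  have [simp]: "dim_row P = n" "dim_col P = r" "dim_row Q = r" "dim_col Q = n" using Pc Qc by auto
  have blk: "four_block_mat (S * K) (S * L) (0\<^sub>m (n - r) r) (0\<^sub>m (n - r) (n - r)) = J * (S * R)"
  proof -
    have "J * (S * R) = J * four_block_mat (S * K) (S * L) (0\<^sub>m 0 r) (0\<^sub>m 0 (n-r))"
      unfolding R_def S_def by (subst diag_four_block_left[OF K L]) simp
    also have "\<dots> = four_block_mat (1\<^sub>m r * (S * K) + 0\<^sub>m r 0 * 0\<^sub>m 0 r) (1\<^sub>m r * (S * L) + 0\<^sub>m r 0 * 0\<^sub>m 0 (n-r))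
       (0\<^sub>m (n-r) r * (S * K) + 0\<^sub>m (n-r) 0 * 0\<^sub>m 0 r) (0\<^sub>m (n-r) r * (S * L) + 0\<^sub>m (n-r) 0 * 0\<^sub>m 0 (n-r))"
      unfolding J_def by (rule mult_four_block_mat) (auto intro!: carrier_matI)
    also have "\<dots> = four_block_mat (S * K) (S * L) (0\<^sub>m (n - r) r) (0\<^sub>m (n - r) (n - r))"
      by (intro cong_four_block_mat; rule eq_matI) auto
    finally show ?thesis by simp
  qed
  have hB: "B = P * S * Q" unfolding HS S_def[symmetric] blk P_def Q_def by simp
  have PP: "mat_adjoint P * P = 1\<^sub>m r"
  proof -
    have "mat_adjoint P * P = mat_adjoint J * (mat_adjoint U * U) * J" unfolding P_def by (subst adj_mult') simp_all
    also have "\<dots> = mat_adjoint J * J" unfolding UU by simp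
    also have "mat_adjoint J = four_block_mat (1\<^sub>m r) (0\<^sub>m r (n-r)) (0\<^sub>m 0 r) (0\<^sub>m 0 (n-r))"
      unfolding J_def by (subst adj_four_block[of _ r r _ 0 _ "n-r"]) auto
    also have "four_block_mat (1\<^sub>m r) (0\<^sub>m r (n-r)) (0\<^sub>m 0 r) (0\<^sub>m 0 (n-r)) * J =
      four_block_mat (1\<^sub>m r * 1\<^sub>m r + 0\<^sub>m r (n-r) * 0\<^sub>m (n-r) r) (1\<^sub>m r * 0\<^sub>m r 0 + 0\<^sub>m r (n-r) * 0\<^sub>m (n-r) 0)
        (0\<^sub>m 0 r * 1\<^sub>m r + 0\<^sub>m 0 (n-r) * 0\<^sub>m (n-r) r) (0\<^sub>m 0 r * 0\<^sub>m r 0 + 0\<^sub>m 0 (n-r) * 0\<^sub>m (n-r) 0)"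
      unfolding J_def by (rule mult_four_block_mat) auto
    also have "\<dots> = 1\<^sub>m r" by (subst four_block_zero_size[of _ r r]) auto
    finally show ?thesis .
  qed
  have QQ: "Q * mat_adjoint Q = 1\<^sub>m r"
  proof -
    have "Q * mat_adjoint Q = R * (mat_adjoint U * U) * mat_adjoint R" unfolding Q_def by (subst adj_mult') simp_all
    also have "\<dots> = R * mat_adjoint R" unfolding UU by simp
    also have "mat_adjoint R = four_block_mat (mat_adjoint K) (0\<^sub>m r 0) (mat_adjoint L) (0\<^sub>m (n-r) 0)"
      unfolding R_def by (subst adj_four_block[of _ r r _ "n-r" _ 0]) (auto simp: K L)
    also have "R * four_block_mat (mat_adjoint K) (0\<^sub>m r 0) (mat_adjoint L) (0\<^sub>m (n-r) 0) =
      four_block_mat (K * mat_adjoint K + L * mat_adjoint L) (K * 0\<^sub>m r 0 + L * 0\<^sub>m (n-r) 0)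
        (0\<^sub>m 0 r * mat_adjoint K + 0\<^sub>m 0 (n-r) * mat_adjoint L) (0\<^sub>m 0 r * 0\<^sub>m r 0 + 0\<^sub>m 0 (n-r) * 0\<^sub>m (n-r) 0)"
      unfolding R_def by (rule mult_four_block_mat) (auto simp: K L)
    also have "\<dots> = 1\<^sub>m r" unfolding KL by (subst four_block_zero_size[of _ r r]) auto
    finally show ?thesis .
  qed
  have QP: "Q * P = K"
  proof -
    have "Q * P = R * (mat_adjoint U * U) * J" unfolding Q_def P_def by simp
    also have "\<dots> = R * J" unfolding UU by simp
    also have "\<dots> = four_block_mat (K * 1\<^sub>m r + L * 0\<^sub>m (n-r) r) (K * 0\<^sub>m r 0 + L * 0\<^sub>m (n-r) 0)
        (0\<^sub>m 0 r * 1\<^sub>m r + 0\<^sub>m 0 (n-r) * 0\<^sub>m (n-r) r) (0\<^sub>m 0 r * 0\<^sub>m r 0 + 0\<^sub>m 0 (n-r) * 0\<^sub>m (n-r) 0)"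
      unfolding R_def J_def by (rule mult_four_block_mat) (auto simp: K L)
    also have "\<dots> = K" by (subst four_block_zero_size[of _ r r]) (auto simp: K)
    finally show ?thesis .
  qed
  have SS': "S * S' = 1\<^sub>m r" "S' * S = 1\<^sub>m r"
    unfolding S_def S'_def mat_diag_diag using s by (auto intro!: eq_matI simp: mat_diag_def) (metis less_irrefl)+
  have MPS: "is_MP_inverse S S'" unfolding is_MP_inverse_def
    using SS' Sc S'c by (simp add: carrier_matI)
  have MPB: "MP_inverse B = mat_adjoint Q * S' * mat_adjoint P"
    unfolding hB by (rule MP_inverse_eq, rule MP_transfer[OF Pc Qc Sc PP QQ MPS])
  have BB: "B * B = P * (S * K * S) * Q"
  proof -
    have "B * B = P * S * (Q * P) * S * Q" unfolding hB by simp
    also have "\<dots> = P * (S * K * S) * Q" unfolding QP by simp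
    finally show ?thesis .
  qed
  have Mc: "S * K * S \<in> carrier_mat r r" using Sc K by simp
  have Z1: "MP_inverse (S * K * S) \<in> carrier_mat r r"
    using MP_inverse_is[of "S * K * S"] Mc unfolding is_MP_inverse_def by auto
  have MPBB: "MP_inverse (B * B) = mat_adjoint Q * MP_inverse (S * K * S) * mat_adjoint P"
    unfolding BB by (rule MP_inverse_eq, rule MP_transfer[OF Pc Qc Mc PP QQ MP_inverse_is])
  have prod: "MP_inverse B * MP_inverse B = mat_adjoint Q * (S' * mat_adjoint K * S') * mat_adjoint P"
  proof -
    have "MP_inverse B * MP_inverse B = mat_adjoint Q * S' * (mat_adjoint P * mat_adjoint Q) * S' * mat_adjoint P"
      unfolding MPB by simp
    also have "mat_adjoint P * mat_adjoint Q = mat_adjoint K" unfolding QP[symmetric] by (subst adj_mult') simp_all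
    finally show ?thesis by simp
  qed
  show ?thesis unfolding MPBB prod S_def[symmetric] S'_def[symmetric]
    by (rule cancel_outer[OF Pc Qc PP QQ Z1]) (intro carrier_matI, simp_all)
qed

end
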